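(* For every $n\ge1$, $$\det\widehat M=(-1)^{\frac{n(n-1)}2}\,2^{n^2+n+1}\,(2n+15)\,\frac{(n+6)!}{6!},$$ in particular $\det\widehat M\neq0$.
   Context: Let $\mathcal E=\{\emptyset\}\cup\{1,\dots,n\}\cup\{\{p,q\}:1\le p<q\le n\}$ (pair indices written with $p<q$). $\widehat M$ is the $\mathcal E\times\mathcal E$ rational matrix with entries $\widehat M_{\rho,\sigma}$, $\rho$ row, $\sigma$ column: Row $\emptyset$: $\widehat M_{\emptyset,\emptyset}=5(n+6)$, $\widehat M_{\emptyset,p}=5n+34$, $\widehat M_{\emptyset,\{p,q\}}=5(n+6)$. Row $k$: $\widehat M_{k,\emptyset}=7$; $\widehat M_{k,p}=35$ if $p=k$, $7$ if $p\neq k$; $\widehat M_{k,\{p,q\}}=3$ if $k=p$, $35$ if $k=q$, $7$ if $k\notin\{p,q\}$. Row $\{k,l\}$: $\widehat M_{\{k,l\},\emptyset}=5$; $\widehat M_{\{k,l\},p}=15$ if $p\in\{k,l\}$, $5$ otherwise; $\widehat M_{\{k,l\},\{p,q\}}=9$ if $\{k,l\}=\{p,q\}$, $3$ if $\{k,l\}\cap\{p,q\}=\{p\}$, $15$ if $\{k,l\}\cap\{p,q\}=\{q\}$, $5$ if disjoint. *)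

theory Defs
  imports "Jordan_Normal_Form.Determinant"
begin

text \<open>Index set E = {emptyset} u {1..n} u {{p,q} : 1 <= p < q <= n}.
  Pairs are represented as Pr p q with p < q.\<close>

datatype idx = Emp | Sg nat | Pr nat nat

definition Eset :: "nat \<Rightarrow> idx set" where
  "Eset n = {Emp} \<union> Sg ` {1..n} \<union> {Pr p q | p q. 1 \<le> p \<and> p < q \<and> q \<le> n}"

text \<open>An enumeration (without repetitions) of E; the determinant does not
  depend on the chosen order since rows and columns are permuted simultaneously.\<close>

definition Elist :: "nat \<Rightarrow> idx list" where
  "Elist n = [Emp] @ map Sg [1..<n+1]
     @ concat (map (\<lambda>p. map (\<lambda>q. Pr p q) [p+1..<n+1]) [1..<n])"

lemma set_Elist: "set (Elist n) = Eset n"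
proof -
  have "set (concat (map (\<lambda>p. map (\<lambda>q. Pr p q) [p+1..<n+1]) [1..<n]))
        = {Pr p q | p q. 1 \<le> p \<and> p < q \<and> q \<le> n}"
  proof (intro equalityI subsetI)
    fix x assume "x \<in> {Pr p q | p q. 1 \<le> p \<and> p < q \<and> q \<le> n}"
    then obtain p q where "x = Pr p q" "1 \<le> p" "p < q" "q \<le> n" by blast
    then show "x \<in> set (concat (map (\<lambda>p. map (\<lambda>q. Pr p q) [p+1..<n+1]) [1..<n]))"
      by (simp del: upt_Suc) (intro bexI[of _ p]; auto)
  qed (auto simp del: upt_Suc)
  then show ?thesis unfolding Elist_def Eset_def by (auto simp del: upt_Suc)
qed

lemma distinct_Elist: "distinct (Elist n)"
proof -
  have "distinct (concat (map (\<lambda>p. map (\<lambda>q. Pr p q) [p+1..<n+1]) [1..<n]))"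
  proof (rule distinct_concat)
    show "distinct (map (\<lambda>p. map (\<lambda>q. Pr p q) [p+1..<n+1]) [1..<n])"
      unfolding distinct_map
    proof (intro conjI inj_onI)
      fix x y assume x: "x \<in> set [1..<n]" and y: "y \<in> set [1..<n]"
        and e: "map (\<lambda>q. Pr x q) [x+1..<n+1] = map (\<lambda>q. Pr y q) [y+1..<n+1]"
      have "hd (map (\<lambda>q. Pr x q) [x+1..<n+1]) = Pr x (x+1)"
        using x by (simp add: hd_map hd_upt del: upt_Suc)
      moreover have "hd (map (\<lambda>q. Pr y q) [y+1..<n+1]) = Pr y (y+1)"
        using y by (simp add: hd_map hd_upt del: upt_Suc)
      ultimately show "x = y" using e by simp
    qed simp
  qed (auto simp: distinct_map inj_on_def simp del: upt_Suc)
  then show ?thesis unfolding Elist_def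
    by (auto simp del: upt_Suc simp: distinct_map inj_on_def)
qed

fun Mhat_entry :: "nat \<Rightarrow> idx \<Rightarrow> idx \<Rightarrow> rat" where
  "Mhat_entry n Emp Emp = 5 * (of_nat n + 6)"
| "Mhat_entry n Emp (Sg p) = 5 * of_nat n + 34"
| "Mhat_entry n Emp (Pr p q) = 5 * (of_nat n + 6)"
| "Mhat_entry n (Sg k) Emp = 7"
| "Mhat_entry n (Sg k) (Sg p) = (if p = k then 35 else 7)"
| "Mhat_entry n (Sg k) (Pr p q) = (if k = p then 3 else if k = q then 35 else 7)"
| "Mhat_entry n (Pr k l) Emp = 5"
| "Mhat_entry n (Pr k l) (Sg p) = (if p \<in> {k, l} then 15 else 5)"
| "Mhat_entry n (Pr k l) (Pr p q) =
     (if {k, l} = {p, q} then 9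
      else if {k, l} \<inter> {p, q} = {p} then 3
      else if {k, l} \<inter> {p, q} = {q} then 15
      else 5)"

definition Mhat :: "nat \<Rightarrow> rat mat" where
  "Mhat n = mat (length (Elist n)) (length (Elist n))
     (\<lambda>(i, j). Mhat_entry n (Elist n ! i) (Elist n ! j))"

end

theory Submission
  imports Defs
begin

definition mk :: "nat \<Rightarrow> (idx \<Rightarrow> idx \<Rightarrow> rat) \<Rightarrow> rat mat" where
 "mk n f = mat (length (Elist n)) (length (Elist n)) (\<lambda>(i,j). f (Elist n ! i) (Elist n ! j))"

lemma mk_carrier: "mk n f \<in> carrier_mat (length (Elist n)) (length (Elist n))"
  by (simp add: mk_def)

lemma sum_Elist: "(\<Sum>i<length (Elist n). h (Elist n ! i)) = (\<Sum>c\<in>Eset n. h c)"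
proof -
  have "(\<Sum>i<length (Elist n). h (Elist n ! i)) = sum_list (map h (Elist n))"
    by (simp add: sum_list_sum_nth lessThan_atLeast0)
  also have "\<dots> = (\<Sum>c\<in>Eset n. h c)"
    using sum_list_distinct_conv_sum_set[OF distinct_Elist] set_Elist by simp
  finally show ?thesis .
qed

lemma prod_Elist: "(\<Prod>i=0..<length (Elist n). h (Elist n ! i)) = (\<Prod>c\<in>Eset n. h c)"
proof -
  have "(\<Prod>i=0..<length (Elist n). h (Elist n ! i)) = prod_list (map h (Elist n))"
    by (simp add: prod.list_conv_set_nth)
  also have "\<dots> = (\<Prod>c\<in>Eset n. h c)"
    using prod.distinct_set_conv_list[OF distinct_Elist, of h] set_Elist by simp
  finally show ?thesis .
qed

lemma mk_mult: "mk n f * mk n g = mk n (\<lambda>a b. \<Sum>c\<in>Eset n. f a c * g c b)"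
proof (rule eq_matI)
  fix i j assume i: "i < dim_row (mk n (\<lambda>a b. \<Sum>c\<in>Eset n. f a c * g c b))"
    and j: "j < dim_col (mk n (\<lambda>a b. \<Sum>c\<in>Eset n. f a c * g c b))"
  then have i': "i < length (Elist n)" and j': "j < length (Elist n)" by (auto simp: mk_def)
  have "(mk n f * mk n g) $$ (i,j) = (\<Sum>k<length (Elist n). f (Elist n ! i) (Elist n ! k) * g (Elist n ! k) (Elist n ! j))"
    using i' j' by (simp add: mk_def scalar_prod_def lessThan_atLeast0)
  also have "\<dots> = (\<Sum>c\<in>Eset n. f (Elist n ! i) c * g c (Elist n ! j))"
    by (rule sum_Elist)
  finally show "(mk n f * mk n g) $$ (i,j) = mk n (\<lambda>a b. \<Sum>c\<in>Eset n. f a c * g c b) $$ (i,j)"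
    using i' j' by (simp add: mk_def)
qed (auto simp: mk_def)

lemma Mhat_mk: "Mhat n = mk n (Mhat_entry n)"
  by (simp add: Mhat_def mk_def)

fun key :: "nat \<Rightarrow> idx \<Rightarrow> nat" where
  "key n Emp = 0"
| "key n (Sg p) = p"
| "key n (Pr p q) = (n+1)*p + q + n"

lemma sorted_wrt_concat_map:
  "(\<forall>x\<in>set xs. sorted_wrt R (f x)) \<Longrightarrow> sorted_wrt (\<lambda>x y. \<forall>a\<in>set (f x). \<forall>b\<in>set (f y). R a b) xs
   \<Longrightarrow> sorted_wrt R (concat (map f xs))"
  by (induction xs) (auto simp: sorted_wrt_append)

lemma key_pr_mono:
  assumes "p < p'" "q \<le> n"
  shows "(n+1)*p + q + n < (n+1)*p' + q' + (n::nat)"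
proof -
  have "(n+1)*(p+1) \<le> (n+1)*p'" using assms by (intro mult_le_mono) auto
  then show ?thesis using assms by (simp add: algebra_simps)
qed

lemma key_pr_mono': "x < y \<Longrightarrow> a < Suc n \<Longrightarrow> x + n * x + a < y + n * y + (b::nat)"
  using key_pr_mono[of x y a n b] by (simp add: algebra_simps)

lemma sorted_Elist: "sorted_wrt (\<lambda>a b. key n a < key n b) (Elist n)"
proof -
  let ?C = "concat (map (\<lambda>p. map (\<lambda>q. Pr p q) [p+1..<n+1]) [1..<n])"
  have sC: "sorted_wrt (\<lambda>a b. key n a < key n b) ?C"
  proof (rule sorted_wrt_concat_map)
    show "\<forall>x\<in>set [1..<n]. sorted_wrt (\<lambda>a b. key n a < key n b) (map (Pr x) [x + 1..<n + 1])"
      by (auto simp: sorted_wrt_map simp del: upt_Suc intro: sorted_wrt_mono_rel[OF _ sorted_wrt_upt])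
    show "sorted_wrt (\<lambda>x y. \<forall>a\<in>set (map (Pr x) [x + 1..<n + 1]). \<forall>b\<in>set (map (Pr y) [y + 1..<n + 1]). key n a < key n b) [1..<n]"
      by (rule sorted_wrt_mono_rel[OF _ sorted_wrt_upt]) (auto simp del: upt_Suc intro: key_pr_mono')
  qed
  have memC: "\<And>x. x \<in> set ?C \<Longrightarrow> n < key n x"
    by (auto simp del: upt_Suc)
  show ?thesis unfolding Elist_def
    using sC memC by (auto simp: sorted_wrt_append sorted_wrt_map simp del: upt_Suc
      intro: sorted_wrt_mono_rel[OF _ sorted_wrt_upt])
qed

lemma key_nth_less: "i < j \<Longrightarrow> j < length (Elist n) \<Longrightarrow> key n (Elist n ! i) < key n (Elist n ! j)"
  using sorted_wrt_nth_less[OF sorted_Elist] by blast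

lemma nth_Eset: "i < length (Elist n) \<Longrightarrow> Elist n ! i \<in> Eset n"
  using set_Elist nth_mem by blast

lemma det_mk_upper:
  assumes "\<And>a b. a \<in> Eset n \<Longrightarrow> b \<in> Eset n \<Longrightarrow> key n b < key n a \<Longrightarrow> f a b = 0"
  shows "det (mk n f) = (\<Prod>a\<in>Eset n. f a a)"
proof -
  have "upper_triangular (mk n f)"
    unfolding upper_triangular_def using assms key_nth_less nth_Eset by (auto simp: mk_def)
  then have "det (mk n f) = prod_list (diag_mat (mk n f))"
    using det_upper_triangular mk_carrier by blast
  also have "\<dots> = (\<Prod>a\<in>Eset n. f a a)"
    unfolding prod_list_diag_prod using prod_Elist[of "\<lambda>a. f a a" n] by (simp add: mk_def)
  finally show ?thesis .
qed

lemma det_mk_lower: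
  assumes "\<And>a b. a \<in> Eset n \<Longrightarrow> b \<in> Eset n \<Longrightarrow> key n a < key n b \<Longrightarrow> f a b = 0"
  shows "det (mk n f) = (\<Prod>a\<in>Eset n. f a a)"
proof -
  have "det (mk n f) = prod_list (diag_mat (mk n f))"
    by (rule det_lower_triangular[OF _ mk_carrier])
      (use assms key_nth_less nth_Eset in \<open>auto simp: mk_def\<close>)
  also have "\<dots> = (\<Prod>a\<in>Eset n. f a a)"
    unfolding prod_list_diag_prod using prod_Elist[of "\<lambda>a. f a a" n] by (simp add: mk_def)
  finally show ?thesis .
qed

definition Pairs :: "nat \<Rightarrow> (nat \<times> nat) set" where
  "Pairs n = {(p,q). 1 \<le> p \<and> p < q \<and> q \<le> n}"

lemma finite_Pairs[simp]: "finite (Pairs n)"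
  by (rule finite_subset[of _ "{0..n} \<times> {0..n}"]) (auto simp: Pairs_def)

lemma finite_Eset[simp]: "finite (Eset n)"
  by (metis List.finite_set set_Elist)

lemma sum_Eset:
  "(\<Sum>c\<in>Eset n. h c) = h Emp + (\<Sum>p\<in>{1..n}. h (Sg p)) + (\<Sum>x\<in>Pairs n. h (Pr (fst x) (snd x)))"
proof -
  have E: "Eset n = {Emp} \<union> (Sg ` {1..n} \<union> (\<lambda>x. Pr (fst x) (snd x)) ` Pairs n)"
    unfolding Eset_def Pairs_def by force
  have "(\<Sum>c\<in>Eset n. h c) = h Emp + (\<Sum>c\<in>Sg ` {1..n} \<union> (\<lambda>x. Pr (fst x) (snd x)) ` Pairs n. h c)"
    unfolding E by (subst sum.union_disjoint) auto
  also have "(\<Sum>c\<in>Sg ` {1..n} \<union> (\<lambda>x. Pr (fst x) (snd x)) ` Pairs n. h c)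
     = (\<Sum>c\<in>Sg ` {1..n}. h c) + (\<Sum>c\<in>(\<lambda>x. Pr (fst x) (snd x)) ` Pairs n. h c)"
    by (subst sum.union_disjoint) auto
  also have "(\<Sum>c\<in>Sg ` {1..n}. h c) = (\<Sum>p\<in>{1..n}. h (Sg p))"
    by (subst sum.reindex) (auto simp: inj_on_def)
  also have "(\<Sum>c\<in>(\<lambda>x. Pr (fst x) (snd x)) ` Pairs n. h c) = (\<Sum>x\<in>Pairs n. h (Pr (fst x) (snd x)))"
    by (subst sum.reindex) (auto simp: inj_on_def prod_eq_iff)
  finally show ?thesis by (simp add: add.assoc)
qed

lemma prod_Eset:
  "(\<Prod>c\<in>Eset n. h c) = h Emp * (\<Prod>p\<in>{1..n}. h (Sg p)) * (\<Prod>x\<in>Pairs n. h (Pr (fst x) (snd x)))"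
proof -
  have E: "Eset n = {Emp} \<union> (Sg ` {1..n} \<union> (\<lambda>x. Pr (fst x) (snd x)) ` Pairs n)"
    unfolding Eset_def Pairs_def by force
  have "(\<Prod>c\<in>Eset n. h c) = h Emp * (\<Prod>c\<in>Sg ` {1..n} \<union> (\<lambda>x. Pr (fst x) (snd x)) ` Pairs n. h c)"
    unfolding E by (subst prod.union_disjoint) auto
  also have "(\<Prod>c\<in>Sg ` {1..n} \<union> (\<lambda>x. Pr (fst x) (snd x)) ` Pairs n. h c)
     = (\<Prod>c\<in>Sg ` {1..n}. h c) * (\<Prod>c\<in>(\<lambda>x. Pr (fst x) (snd x)) ` Pairs n. h c)"
    by (subst prod.union_disjoint) auto
  also have "(\<Prod>c\<in>Sg ` {1..n}. h c) = (\<Prod>p\<in>{1..n}. h (Sg p))"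
    by (subst prod.reindex) (auto simp: inj_on_def)
  also have "(\<Prod>c\<in>(\<lambda>x. Pr (fst x) (snd x)) ` Pairs n. h c) = (\<Prod>x\<in>Pairs n. h (Pr (fst x) (snd x)))"
    by (subst prod.reindex) (auto simp: inj_on_def prod_eq_iff)
  finally show ?thesis by (simp add: mult.assoc)
qed

lemma card_Pairs: "2 * card (Pairs n) = n * (n - 1)"
proof (induction n)
  case 0
  have "Pairs 0 = {}" by (auto simp: Pairs_def)
  then show ?case by simp
next
  case (Suc n)
  have "Pairs (Suc n) = Pairs n \<union> (\<lambda>r. (r, Suc n)) ` {1..n}"
    unfolding Pairs_def by auto
  moreover have "card (Pairs n \<union> (\<lambda>r. (r, Suc n)) ` {1..n}) = card (Pairs n) + n"
    by (subst card_Un_disjoint) (auto simp: card_image inj_on_def Pairs_def[symmetric], auto simp: Pairs_def)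
  ultimately show ?case using Suc by (cases n) (auto simp: algebra_simps)
qed

lemma card_Pairs_mem:
  assumes "1 \<le> p" "p \<le> n"
  shows "card {x\<in>Pairs n. p = fst x \<or> p = snd x} = n - 1"
proof -
  have "{x\<in>Pairs n. p = fst x \<or> p = snd x} = (\<lambda>s. (p,s)) ` {p<..n} \<union> (\<lambda>r. (r,p)) ` {1..<p}"
    using assms unfolding Pairs_def by auto
  moreover have "card ((\<lambda>s. (p,s)) ` {p<..n} \<union> (\<lambda>r. (r,p)) ` {1..<p}) = (n - p) + (p - 1)"
    by (subst card_Un_disjoint) (auto simp: card_image inj_on_def)
  ultimately show ?thesis using assms by simp
qed

lemma card_Pairs_mem_fst:
  assumes "1 \<le> p" "p \<le> n" "1 \<le> k" "k \<le> n"
  shows "card {x\<in>Pairs n. (p = fst x \<or> p = snd x) \<and> k = fst x} = (if k = p then n - p else if k < p then 1 else 0)"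
proof -
  consider "k = p" | "k < p" | "p < k" by linarith
  then show ?thesis
  proof cases
    case 1
    then have "{x\<in>Pairs n. (p = fst x \<or> p = snd x) \<and> k = fst x} = (\<lambda>s. (p,s)) ` {p<..n}"
      using assms unfolding Pairs_def by auto
    then show ?thesis using 1 by (simp add: card_image inj_on_def)
  next
    case 2
    then have "{x\<in>Pairs n. (p = fst x \<or> p = snd x) \<and> k = fst x} = {(k,p)}"
      using assms unfolding Pairs_def by auto
    then show ?thesis using 2 by simp
  next
    case 3
    then have "{x\<in>Pairs n. (p = fst x \<or> p = snd x) \<and> k = fst x} = {}"
      using assms unfolding Pairs_def by auto
    then show ?thesis using 3 by simp
  qed
qed

lemma mk_cong: "(\<And>a b. a \<in> Eset n \<Longrightarrow> b \<in> Eset n \<Longrightarrow> f a b = g a b) \<Longrightarrow> mk n f = mk n g"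
  unfolding mk_def by (rule eq_matI) (auto intro: nth_Eset)

lemma sum_delta_E: fixes f :: "idx \<Rightarrow> rat" shows "x \<in> Eset n \<Longrightarrow> (\<Sum>c\<in>Eset n. f c * (if c = x then 1 else 0)) = f x"
proof -
  assume x: "x \<in> Eset n"
  have "(\<Sum>c\<in>Eset n. f c * (if c = x then 1 else 0)) = (\<Sum>c\<in>Eset n. if c = x then f x else 0)"
    by (rule sum.cong) auto
  then show ?thesis using x by simp
qed

lemma Emp_E[simp]: "Emp \<in> Eset n" by (simp add: Eset_def)
lemma Sg_E[simp]: "Sg p \<in> Eset n \<longleftrightarrow> 1 \<le> p \<and> p \<le> n" by (auto simp: Eset_def)
lemma Pr_E[simp]: "Pr p q \<in> Eset n \<longleftrightarrow> 1 \<le> p \<and> p < q \<and> q \<le> n" by (auto simp: Eset_def)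

fun Y1 :: "idx \<Rightarrow> idx \<Rightarrow> rat" where
  "Y1 c Emp = (if c = Emp then 1 else 0)"
| "Y1 c (Sg p) = (if c = Sg p then 1 else 0) - (if c = Emp then 1 else 0)"
| "Y1 c (Pr p q) = (if c = Pr p q then 1 else 0) - (if c = Sg q then 1 else 0)
     + 1/5 * (if c = Sg p then 1 else 0) - 1/5 * (if c = Emp then 1 else 0)"

fun W1 :: "nat \<Rightarrow> idx \<Rightarrow> idx \<Rightarrow> rat" where
  "W1 n a Emp = Mhat_entry n a Emp"
| "W1 n Emp (Sg p) = 4"
| "W1 n (Sg k) (Sg p) = (if k = p then 28 else 0)"
| "W1 n (Pr k l) (Sg p) = (if p = k \<or> p = l then 10 else 0)"
| "W1 n Emp (Pr p q) = -16/5"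
| "W1 n (Sg k) (Pr p q) = (if k = p then 8/5 else 0)"
| "W1 n (Pr k l) (Pr p q) = (if k = p \<and> l = q then -4 else 0)"

lemma Mhat_PP:
  assumes "k < l" "p < q"
  shows "Mhat_entry n (Pr k l) (Pr p q) =
    (if k = p \<and> l = q then 9 else if (p = k \<or> p = l) \<and> \<not> (q = k \<or> q = l) then 3
     else if (q = k \<or> q = l) \<and> \<not> (p = k \<or> p = l) then 15 else 5)"
proof -
  have e1: "({k,l} = {p,q}) = (k = p \<and> l = q)"
    using assms by (auto simp: doubleton_eq_iff)
  have e2: "({k,l} \<inter> {p,q} = {p}) = ((p = k \<or> p = l) \<and> \<not> (q = k \<or> q = l))"
    using assms by auto
  have e3: "({k,l} \<inter> {p,q} = {q}) = ((q = k \<or> q = l) \<and> \<not> (p = k \<or> p = l))"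
    using assms by auto
  show ?thesis by (simp only: Mhat_entry.simps e1 e2 e3)
qed


lemma MY1:
  assumes a: "a \<in> Eset n" and b: "b \<in> Eset n"
  shows "(\<Sum>c\<in>Eset n. Mhat_entry n a c * Y1 c b) = W1 n a b"
proof (cases b)
  case Emp
  then show ?thesis using sum_delta_E[of Emp n "Mhat_entry n a"] by simp
next
  case (Sg p)
  have "(\<Sum>c\<in>Eset n. Mhat_entry n a c * Y1 c b) =
     (\<Sum>c\<in>Eset n. Mhat_entry n a c * (if c = Sg p then 1 else 0)) - (\<Sum>c\<in>Eset n. Mhat_entry n a c * (if c = Emp then 1 else 0))"
    unfolding Sg by (simp add: right_diff_distrib sum_subtractf)
  also have "\<dots> = Mhat_entry n a (Sg p) - Mhat_entry n a Emp"
    using b Sg by (simp add: sum_delta_E)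
  finally show ?thesis using a unfolding Sg Eset_def by auto
next
  case (Pr p q)
  have "(\<Sum>c\<in>Eset n. Mhat_entry n a c * Y1 c b) =
     (\<Sum>c\<in>Eset n. Mhat_entry n a c * (if c = Pr p q then 1 else 0)) - (\<Sum>c\<in>Eset n. Mhat_entry n a c * (if c = Sg q then 1 else 0))
     + 1/5 * (\<Sum>c\<in>Eset n. Mhat_entry n a c * (if c = Sg p then 1 else 0)) - 1/5 * (\<Sum>c\<in>Eset n. Mhat_entry n a c * (if c = Emp then 1 else 0))"
    unfolding Pr by (simp add: algebra_simps sum_subtractf sum.distrib sum_distrib_left)
  also have "\<dots> = Mhat_entry n a (Pr p q) - Mhat_entry n a (Sg q) + 1/5 * Mhat_entry n a (Sg p) - 1/5 * Mhat_entry n a Emp"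
    using b Pr by (simp add: sum_delta_E)
  also have "\<dots> = W1 n a b"
  proof -
    note bP = Pr
    have pq: "p < q" "1 \<le> p" "q \<le> n" using b bP by auto
    show ?thesis
    proof (cases a)
      case Emp then show ?thesis unfolding bP by (simp add: field_simps)
    next
      case (Sg k) then show ?thesis unfolding bP using pq by auto
    next
      case (Pr k l)
      then have "k < l" using a by auto
      have M: "Mhat_entry n a (Pr p q) = (if k = p \<and> l = q then 9 else if (p = k \<or> p = l) \<and> \<not> (q = k \<or> q = l) then 3
         else if (q = k \<or> q = l) \<and> \<not> (p = k \<or> p = l) then 15 else 5)"
        unfolding Pr using Mhat_PP[OF \<open>k < l\<close> pq(1)] .
      have M2: "Mhat_entry n a (Sg q) = (if q = k \<or> q = l then 15 else 5)"
        "Mhat_entry n a (Sg p) = (if p = k \<or> p = l then 15 else 5)"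
        "Mhat_entry n a Emp = 5" unfolding Pr by auto
      have W: "W1 n a b = (if k = p \<and> l = q then -4 else 0)" unfolding Pr bP by simp
      show ?thesis unfolding M M2 W using pq \<open>k < l\<close>
        by (cases "p = k \<or> p = l"; cases "q = k \<or> q = l"; cases "k = p \<and> l = q") auto
    qed
  qed
  finally show ?thesis .
qed

fun Y2 :: "idx \<Rightarrow> idx \<Rightarrow> rat" where
  "Y2 Emp Emp = 1"
| "Y2 (Sg k) Emp = -1/4"
| "Y2 (Pr k l) Emp = 0"
| "Y2 Emp (Sg p) = 0"
| "Y2 (Sg k) (Sg p) = (if k = p then 1 else 0)"
| "Y2 (Pr r s) (Sg p) = (if p = r \<or> p = s then 5/2 else 0)"
| "Y2 c (Pr p q) = (if c = Pr p q then 1 else 0)"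

fun Tm :: "nat \<Rightarrow> idx \<Rightarrow> idx \<Rightarrow> rat" where
  "Tm n Emp Emp = 4 * of_nat n + 30"
| "Tm n (Sg k) Emp = 0"
| "Tm n (Pr k l) Emp = 0"
| "Tm n Emp (Sg p) = 12 - 8 * of_nat n"
| "Tm n (Sg k) (Sg p) = (if k = p then 28 + 4 * of_nat (n - p) else if k < p then 4 else 0)"
| "Tm n (Pr k l) (Sg p) = 0"
| "Tm n a (Pr p q) = W1 n a (Pr p q)"

lemma sum_if_card: "finite A \<Longrightarrow> (\<Sum>x\<in>A. if P x then c else 0) = of_nat (card {x\<in>A. P x}) * (c::rat)"
  by (simp add: sum.inter_filter[symmetric])

lemma WY2:
  assumes a: "a \<in> Eset n" and b: "b \<in> Eset n"
  shows "(\<Sum>c\<in>Eset n. W1 n a c * Y2 c b) = Tm n a b"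
proof (cases b)
  case (Pr p q)
  have "(\<Sum>c\<in>Eset n. W1 n a c * Y2 c b) = (\<Sum>c\<in>Eset n. W1 n a c * (if c = Pr p q then 1 else 0))"
    unfolding Pr by (rule sum.cong) auto
  also have "\<dots> = W1 n a (Pr p q)" using b Pr by (intro sum_delta_E) auto
  finally show ?thesis unfolding Pr by simp
next
  case Emp
  note bE = Emp
  have S: "(\<Sum>c\<in>Eset n. W1 n a c * Y2 c b) = W1 n a Emp + (\<Sum>p\<in>{1..n}. W1 n a (Sg p) * (-1/4))"
    unfolding sum_Eset Emp by (cases a) simp_all
  show ?thesis
  proof (cases a)
    case Emp then show ?thesis using S unfolding bE Emp by simp
  next
    case (Sg k)
    have k: "k \<in> {1..n}" using a Sg by auto
    have "(\<Sum>p\<in>{1..n}. W1 n a (Sg p) * (-1/4)) = (\<Sum>p\<in>{1..n}. if k = p then -7 else 0)"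
      unfolding Sg by (rule sum.cong) auto
    also have "\<dots> = -7" using k by simp
    finally show ?thesis using S unfolding bE Sg by simp
  next
    case (Pr k l)
    have k: "k \<in> {1..n}" "l \<in> {1..n}" "k \<noteq> l" using a Pr by auto
    have "(\<Sum>p\<in>{1..n}. W1 n a (Sg p) * (-1/4)) = (\<Sum>p\<in>{1..n}. (if k = p then -5/2 else 0) + (if l = p then -5/2 else 0))"
      unfolding Pr using k by (intro sum.cong) auto
    also have "\<dots> = -5" using k by (simp add: sum.distrib)
    finally show ?thesis using S unfolding bE Pr by simp
  qed
next
  case (Sg p)
  note bS = Sg
  have p: "1 \<le> p" "p \<le> n" using b Sg by auto
  have S: "(\<Sum>c\<in>Eset n. W1 n a c * Y2 c b) = W1 n a (Sg p) +
     (\<Sum>x\<in>Pairs n. W1 n a (Pr (fst x) (snd x)) * (if p = fst x \<or> p = snd x then 5/2 else 0))"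
  proof -
    have "(\<Sum>p'\<in>{1..n}. W1 n a (Sg p') * Y2 (Sg p') (Sg p)) = (\<Sum>p'\<in>{1..n}. if p' = p then W1 n a (Sg p) else 0)"
      by (rule sum.cong) auto
    also have "\<dots> = W1 n a (Sg p)" using p by simp
    finally show ?thesis unfolding sum_Eset Sg by (cases a) simp_all
  qed
  show ?thesis
  proof (cases a)
    case Emp
    have "(\<Sum>x\<in>Pairs n. W1 n a (Pr (fst x) (snd x)) * (if p = fst x \<or> p = snd x then 5/2 else 0))
       = (\<Sum>x\<in>Pairs n. if p = fst x \<or> p = snd x then -8 else 0)"
      unfolding Emp by (rule sum.cong) auto
    also have "\<dots> = of_nat (n - 1) * (-8)"
      by (simp add: sum_if_card card_Pairs_mem[OF p])
    finally show ?thesis using S p unfolding bS Emp by (simp add: of_nat_diff algebra_simps)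
  next
    case (Sg k)
    have k: "1 \<le> k" "k \<le> n" using a Sg by auto
    have "(\<Sum>x\<in>Pairs n. W1 n a (Pr (fst x) (snd x)) * (if p = fst x \<or> p = snd x then 5/2 else 0))
       = (\<Sum>x\<in>Pairs n. if (p = fst x \<or> p = snd x) \<and> k = fst x then 4 else 0)"
      unfolding Sg by (rule sum.cong) auto
    also have "\<dots> = of_nat (if k = p then n - p else if k < p then 1 else 0) * 4"
      by (simp add: sum_if_card card_Pairs_mem_fst[OF p k] del: of_nat_eq_iff)
    finally show ?thesis using S unfolding bS Sg by auto
  next
    case (Pr k l)
    have kl: "(k, l) \<in> Pairs n" using a Pr by (auto simp: Pairs_def)
    have "(\<Sum>x\<in>Pairs n. W1 n a (Pr (fst x) (snd x)) * (if p = fst x \<or> p = snd x then 5/2 else 0))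
       = (\<Sum>x\<in>Pairs n. if x = (k, l) then (if p = k \<or> p = l then -10 else 0) else 0)"
      unfolding Pr by (rule sum.cong) auto
    also have "\<dots> = (if p = k \<or> p = l then -10 else 0)"
      by (simp only: sum.delta finite_Pairs kl if_True)
    finally show ?thesis using S unfolding bS Pr by simp
  qed
qed

lemma step1: "Mhat n * mk n Y1 = mk n (W1 n)"
  unfolding Mhat_mk mk_mult by (rule mk_cong) (rule MY1)

lemma step2: "mk n (W1 n) * mk n Y2 = mk n (Tm n)"
  unfolding mk_mult by (rule mk_cong) (rule WY2)

lemma det_Y1: "det (mk n Y1) = 1"
proof -
  have "det (mk n Y1) = (\<Prod>a\<in>Eset n. Y1 a a)"
  proof (rule det_mk_upper)
    fix a b assume "a \<in> Eset n" "b \<in> Eset n" "key n b < key n a"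
    then show "Y1 a b = 0"
      by (cases b; cases a) auto
  qed
  also have "\<dots> = 1"
  proof (rule prod.neutral, intro ballI)
    fix a show "Y1 a a = 1" by (cases a) auto
  qed
  finally show ?thesis .
qed

lemma det_Y2: "det (mk n Y2) = 1"
proof -
  have "det (mk n Y2) = (\<Prod>a\<in>Eset n. Y2 a a)"
  proof (rule det_mk_lower)
    fix a b assume "a \<in> Eset n" "b \<in> Eset n" "key n a < key n b"
    then show "Y2 a b = 0"
      by (cases b; cases a) auto
  qed
  also have "\<dots> = 1"
  proof (rule prod.neutral, intro ballI)
    fix a show "Y2 a a = 1" by (cases a) auto
  qed
  finally show ?thesis .
qed

lemma det_Tm: "det (mk n (Tm n)) = (\<Prod>a\<in>Eset n. Tm n a a)"
proof (rule det_mk_upper)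
  fix a b assume "a \<in> Eset n" "b \<in> Eset n" "key n b < key n a"
  then show "Tm n a b = 0"
    by (cases b; cases a) auto
qed

lemma det_Mhat_Tm: "det (Mhat n) = (\<Prod>a\<in>Eset n. Tm n a a)"
proof -
  have c: "Mhat n \<in> carrier_mat (length (Elist n)) (length (Elist n))"
    using mk_carrier Mhat_mk by metis
  have "det (mk n (Tm n)) = det (Mhat n * mk n Y1 * mk n Y2)"
    by (simp add: step1 step2)
  also have "\<dots> = det (Mhat n)"
    using c mk_carrier det_Y1 det_Y2 by (simp add: det_mult[of _ "length (Elist n)"])
  finally show ?thesis using det_Tm by simp
qed

lemma prod_fact: "(\<Prod>p\<in>{1..n}. (of_nat (n - p) + 7 :: rat)) * fact 6 = fact (n + 6)"
proof (induction n)
  case 0 then show ?case by simp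
next
  case (Suc n)
  have "(\<Prod>p\<in>{1..Suc n}. (of_nat (Suc n - p) + 7 :: rat))
     = (of_nat n + 7) * (\<Prod>p\<in>{Suc 1..Suc n}. (of_nat (Suc n - p) + 7 :: rat))"
    by (subst prod.atLeast_Suc_atMost) auto
  also have "(\<Prod>p\<in>{Suc 1..Suc n}. (of_nat (Suc n - p) + 7 :: rat)) = (\<Prod>p\<in>{1..n}. (of_nat (n - p) + 7 :: rat))"
    by (subst prod.shift_bounds_cl_Suc_ivl) simp
  finally have "(\<Prod>p\<in>{1..Suc n}. (of_nat (Suc n - p) + 7 :: rat)) * fact 6 = (of_nat n + 7) * ((\<Prod>p\<in>{1..n}. (of_nat (n - p) + 7 :: rat)) * fact 6)"
    by (simp only: mult.assoc)
  also have "\<dots> = (of_nat n + 7) * fact (n + 6)" by (simp only: Suc.IH)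
  also have "\<dots> = fact (Suc n + 6)"
    by (simp only: fact_Suc add_Suc) simp
  finally show ?case .
qed

lemma det_value:
  assumes "n \<ge> 1"
  shows "(\<Prod>a\<in>Eset n. Tm n a a) = (-1) ^ (n * (n - 1) div 2) * 2 ^ (n\<^sup>2 + n + 1) * (2 * of_nat n + 15)
            * fact (n + 6) / fact 6"
proof -
  define m where "m = card (Pairs n)"
  have m2: "n * (n - 1) div 2 = m" using card_Pairs[of n] unfolding m_def by simp
  have P1: "(\<Prod>p\<in>{1..n}. Tm n (Sg p) (Sg p)) = 4 ^ n * (\<Prod>p\<in>{1..n}. (of_nat (n - p) + 7 :: rat))"
  proof -
    have "(\<Prod>p\<in>{1..n}. Tm n (Sg p) (Sg p)) = (\<Prod>p\<in>{1..n}. 4 * (of_nat (n - p) + 7 :: rat))"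
      by (rule prod.cong) auto
    also have "\<dots> = 4 ^ n * (\<Prod>p\<in>{1..n}. (of_nat (n - p) + 7 :: rat))"
      by (simp only: prod.distrib prod_constant card_atLeastAtMost) simp
    finally show ?thesis .
  qed
  have P2: "(\<Prod>x\<in>Pairs n. Tm n (Pr (fst x) (snd x)) (Pr (fst x) (snd x))) = (-4) ^ m"
    unfolding m_def by simp
  have F: "(\<Prod>p\<in>{1..n}. (of_nat (n - p) + 7 :: rat)) = fact (n + 6) / fact 6"
    using prod_fact[of n] by (simp add: field_simps)
  have e: "2 * m + 2 * n + 1 = n\<^sup>2 + n + 1"
    using card_Pairs[of n] unfolding m_def by (cases n) (auto simp: power2_eq_square algebra_simps)
  have "(-4::rat) ^ m = (-1) ^ m * 2 ^ (2 * m)"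
    by (simp add: power_mult power_mult_distrib[symmetric])
  moreover have "(4::rat) ^ n = 2 ^ (2 * n)" by (simp add: power_mult)
  moreover have "(2::rat) ^ (n\<^sup>2 + n + 1) = 2 * 2 ^ (2 * m) * 2 ^ (2 * n)"
  proof -
    have "(2::rat) ^ (n\<^sup>2 + n + 1) = 2 ^ (2 * m + 2 * n + 1)" by (simp only: e)
    also have "\<dots> = 2 * 2 ^ (2 * m) * 2 ^ (2 * n)" by (simp only: power_add power_one_right mult_ac)
    finally show ?thesis .
  qed
  ultimately show ?thesis
    unfolding prod_Eset P1 P2 m2 F by (simp add: algebra_simps)
qed

theorem mainTheorem12:
  fixes n :: nat
  assumes "n \<ge> 1"
  shows "det (Mhat n) = (-1) ^ (n * (n - 1) div 2) * 2 ^ (n\<^sup>2 + n + 1) * (2 * of_nat n + 15)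
            * fact (n + 6) / fact 6
         \<and> det (Mhat n) \<noteq> 0"
proof
  show *: "det (Mhat n) = (-1) ^ (n * (n - 1) div 2) * 2 ^ (n\<^sup>2 + n + 1) * (2 * of_nat n + 15)
            * fact (n + 6) / fact 6"
    using det_Mhat_Tm det_value[OF assms] by simp
  have "(2 * of_nat n + 15 :: rat) \<noteq> 0"
    by (metis add_nonneg_pos of_nat_0_le_iff mult_nonneg_nonneg zero_le_numeral zero_less_numeral less_irrefl)
  then show "det (Mhat n) \<noteq> 0" unfolding * by simp
qed

end
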